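(* Let $X$ be a Tychonoff space and let $cX$, $dX$ be compactifications of $X$ with $dX\preceq cX$, witnessed by a continuous map $\varphi: cX\to dX$. Suppose $X$ is an $F_{\sigma\delta}$ subset of $cX$. Then $X$ is an $F_{\sigma\delta}$ subset of $dX$ if and only if there exists a sequence $(H_n)_{n\in\mathbb N}$ of $F_\sigma$ subsets of $cX$ such that for every $F\in\mathcal F(cX,dX)$ there is $n\in\mathbb N$ with $X\subset H_n\subset cX\setminus F$.
   Context: A compactification of $X$ is a pair $(cX,\varphi_c)$ with $cX$ compact Hausdorff and $\varphi_c$ a homeomorphic embedding of $X$ onto a dense subspace of $cX$; we identify $X$ with its image in $cX$ (and in $dX$). We write $dX\preceq cX$ (i.e. $cX$ is larger than $dX$) if there exists a continuous map $\varphi:cX\to dX$ with $\varphi_d=\varphi\circ\varphi_c$. For such $\varphi$, $\mathcal F(cX,dX):=\{\varphi^{-1}(x) : x\in dX,\ \varphi^{-1}(x)\text{ is not a singleton}\}$. An $F_{\sigma\delta}$ set is a countable intersection of $F_\sigma$ sets. *)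

theory Defs
  imports "HOL-Analysis.Analysis"
begin

definition tychonoff_space :: "'a topology \<Rightarrow> bool" where
  "tychonoff_space X \<longleftrightarrow> completely_regular_space X \<and> Hausdorff_space X"

definition compactification :: "'a topology \<Rightarrow> 'b topology \<Rightarrow> ('a \<Rightarrow> 'b) \<Rightarrow> bool" where
  "compactification X cX e \<longleftrightarrow>
     compact_space cX \<and> Hausdorff_space cX \<and> embedding_map X cX e \<and>
     cX closure_of (e ` topspace X) = topspace cX"

definition fsigmadelta_in :: "'a topology \<Rightarrow> 'a set \<Rightarrow> bool" where
  "fsigmadelta_in X \<equiv> (countable intersection_of fsigma_in X) relative_to topspace X"

definition nonsingleton_fibres :: "'b topology \<Rightarrow> 'c topology \<Rightarrow> ('b \<Rightarrow> 'c) \<Rightarrow> 'b set set" where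
  "nonsingleton_fibres cX dX phi =
     {phi -` {x} \<inter> topspace cX | x. x \<in> topspace dX \<and> \<not> (\<exists>y. phi -` {x} \<inter> topspace cX = {y})}"

end

theory Submission
  imports Defs
begin

lemma fsigmadelta_iff:
  "fsigmadelta_in X S \<longleftrightarrow> (\<exists>U. countable U \<and> (\<forall>u\<in>U. fsigma_in X u) \<and> topspace X \<inter> \<Inter>U = S)"
  unfolding fsigmadelta_in_def relative_to_def intersection_of_def by blast

lemma fsigma_preimage:
  assumes "continuous_map X Y f" "fsigma_in Y S"
  shows "fsigma_in X (f -` S \<inter> topspace X)"
proof -
  obtain C where C: "countable C" "\<And>c. c \<in> C \<Longrightarrow> closedin Y c" "\<Union>C = S"
    using assms(2) unfolding fsigma_in_def union_of_def by blast
  have eq: "f -` S \<inter> topspace X = \<Union>((\<lambda>c. {x \<in> topspace X. f x \<in> c}) ` C)"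
    using C(3) by auto
  show ?thesis unfolding eq
    apply (rule fsigma_in_Union)
    using C(1) apply simp
    by (rule closed_imp_fsigma_in, auto intro: closedin_continuous_map_preimage[OF assms(1)] C(2))
qed

lemma fsigma_image:
  assumes "continuous_map X Y f" "fsigma_in X S" "compact_space X" "Hausdorff_space Y"
  shows "fsigma_in Y (f ` S)"
proof -
  obtain C where C: "countable C" "\<And>c. c \<in> C \<Longrightarrow> closedin X c" "\<Union>C = S"
    using assms(2) unfolding fsigma_in_def union_of_def by blast
  have eq: "f ` S = \<Union>((\<lambda>c. f ` c) ` C)"
    using C(3) by auto
  show ?thesis unfolding eq
    apply (rule fsigma_in_Union)
    using C(1) apply simp
  proof (rule closed_imp_fsigma_in, elim imageE)
    fix T c assume "T = f ` c" "c \<in> C"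
    then show "closedin Y T"
      using compactin_imp_closedin[OF assms(4) image_compactin[OF closedin_compact_space[OF assms(3) C(2)] assms(1)]]
      by blast
  qed
qed

lemma key_fibre:
  assumes cc: "compactification X cX ec"
    and cd: "compactification X dX ed"
    and phi: "continuous_map cX dX phi"
    and e: "\<And>x. x \<in> topspace X \<Longrightarrow> ed x = phi (ec x)"
    and z: "z \<in> topspace X" and y: "y \<in> topspace cX" and py: "phi y = ed z"
  shows "y = ec z"
proof (rule ccontr)
  assume ne: "y \<noteq> ec z"
  have hc: "homeomorphic_map X (subtopology cX (ec ` topspace X)) ec"
    using cc unfolding compactification_def embedding_map_def by blast
  have hd: "homeomorphic_map X (subtopology dX (ed ` topspace X)) ed"
    using cd unfolding compactification_def embedding_map_def by blast
  have contc: "continuous_map X cX ec"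
    using hc homeomorphic_imp_continuous_map continuous_map_in_subtopology by blast
  have ecz: "ec z \<in> topspace cX" using contc z continuous_map_image_subset_topspace by blast
  obtain U V where UV: "openin cX U" "openin cX V" "ec z \<in> U" "y \<in> V" "disjnt U V"
  proof -
    have "Hausdorff_space cX" using cc unfolding compactification_def by blast
    then show ?thesis using ne ecz y that unfolding Hausdorff_space_def by blast
  qed
  have oU: "openin X {x \<in> topspace X. ec x \<in> U}"
    using contc UV(1) openin_continuous_map_preimage by blast
  have "openin (subtopology dX (ed ` topspace X)) (ed ` {x \<in> topspace X. ec x \<in> U})"
  proof -
    have om: "open_map X (subtopology dX (ed ` topspace X)) ed"
      by (rule homeomorphic_imp_open_map[OF hd])
    show ?thesis using om oU unfolding open_map_def by blast
  qed
  then obtain W where W: "openin dX W" "ed ` {x \<in> topspace X. ec x \<in> U} = W \<inter> ed ` topspace X"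
    unfolding openin_subtopology by blast
  have "ed z \<in> ed ` {x \<in> topspace X. ec x \<in> U}" using z UV(3) by blast
  then have edzW: "ed z \<in> W" using W(2) by blast
  define V' where "V' = {p \<in> topspace cX. phi p \<in> W} \<inter> V"
  have "openin cX {p \<in> topspace cX. phi p \<in> W}"
    by (rule openin_continuous_map_preimage[OF phi W(1)])
  then have oV': "openin cX V'" unfolding V'_def
    using UV(2) by (rule openin_Int)
  have "y \<in> V'" unfolding V'_def using y py edzW UV(4) by simp
  then have "ec ` topspace X \<inter> V' \<noteq> {}"
  proof -
    have "cX closure_of (ec ` topspace X) = topspace cX"
      using cc unfolding compactification_def by blast
    then have "\<forall>T. openin cX T \<and> T \<noteq> {} \<longrightarrow> ec ` topspace X \<inter> T \<noteq> {}"
      by (simp only: dense_intersects_open)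
    then show ?thesis using oV' \<open>y \<in> V'\<close> by blast
  qed
  then obtain w where w: "w \<in> topspace X" "ec w \<in> V'" by blast
  have "phi (ec w) \<in> W" using w(2) unfolding V'_def by blast
  then have "ed w \<in> W" using e[OF w(1)] by simp
  moreover have "ed w \<in> ed ` topspace X" using w(1) by blast
  ultimately have "ed w \<in> W \<inter> ed ` topspace X" by blast
  then have "ed w \<in> ed ` {x \<in> topspace X. ec x \<in> U}" using W(2) by simp
  then obtain w' where w': "w' \<in> topspace X" "ec w' \<in> U" "ed w = ed w'" by blast
  have "w = w'" using homeomorphic_imp_injective_map[OF hd] w(1) w'(1) w'(3) unfolding inj_on_def by blast
  then have "ec w \<in> U" using w'(2) by simp
  moreover have "ec w \<in> V" using w(2) unfolding V'_def by blast
  ultimately show False using UV(5) unfolding disjnt_def by blast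
qed


theorem proposition3p2:
  fixes X :: "'a topology" and cX :: "'b topology" and dX :: "'c topology"
    and ec :: "'a \<Rightarrow> 'b" and ed :: "'a \<Rightarrow> 'c" and phi :: "'b \<Rightarrow> 'c"
  assumes "tychonoff_space X"
    and "compactification X cX ec"
    and "compactification X dX ed"
    and "continuous_map cX dX phi"
    and "\<And>x. x \<in> topspace X \<Longrightarrow> ed x = phi (ec x)"
    and "fsigmadelta_in cX (ec ` topspace X)"
  shows "fsigmadelta_in dX (ed ` topspace X) \<longleftrightarrow>
    (\<exists>H :: nat \<Rightarrow> 'b set. (\<forall>n. fsigma_in cX (H n)) \<and>
       (\<forall>F \<in> nonsingleton_fibres cX dX phi.
          \<exists>n. ec ` topspace X \<subseteq> H n \<and> H n \<subseteq> topspace cX - F))"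
proof -
  note cc = assms(2) and cd = assms(3) and phi = assms(4) and e = assms(5)
  have key: "\<And>z y. z \<in> topspace X \<Longrightarrow> y \<in> topspace cX \<Longrightarrow> phi y = ed z \<Longrightarrow> y = ec z"
    using key_fibre[OF cc cd phi e] by blast
  have ecsub: "ec ` topspace X \<subseteq> topspace cX"
  proof -
    have "homeomorphic_map X (subtopology cX (ec ` topspace X)) ec"
      using cc unfolding compactification_def embedding_map_def by blast
    then have "ec ` topspace X \<subseteq> topspace (subtopology cX (ec ` topspace X))"
      by (meson homeomorphic_imp_continuous_map continuous_map_image_subset_topspace)
    then show ?thesis by simp
  qed
  have edsub: "ed ` topspace X \<subseteq> topspace dX"
  proof -
    have "homeomorphic_map X (subtopology dX (ed ` topspace X)) ed"
      using cd unfolding compactification_def embedding_map_def by blast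
    then have "ed ` topspace X \<subseteq> topspace (subtopology dX (ed ` topspace X))"
      by (meson homeomorphic_imp_continuous_map continuous_map_image_subset_topspace)
    then show ?thesis by simp
  qed
  obtain V where V: "countable V" "\<And>u. u \<in> V \<Longrightarrow> fsigma_in cX u"
      "topspace cX \<inter> \<Inter>V = ec ` topspace X"
    using assms(6) unfolding fsigmadelta_iff by blast
  show ?thesis
  proof
    assume "fsigmadelta_in dX (ed ` topspace X)"
    then obtain U where U: "countable U" "\<And>u. u \<in> U \<Longrightarrow> fsigma_in dX u"
      "topspace dX \<inter> \<Inter>U = ed ` topspace X"
      unfolding fsigmadelta_iff by blast
    define U' where "U' = insert (topspace dX) U"
    have U'c: "countable U'" "U' \<noteq> {}" using U(1) unfolding U'_def by auto
    define g where "g = from_nat_into U'"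
    have rg: "range g = U'" unfolding g_def using range_from_nat_into[OF U'c(2) U'c(1)] .
    have gf: "fsigma_in dX (g n)" for n
    proof -
      have "g n \<in> U'" using rg by blast
      then show ?thesis unfolding U'_def using U(2) by auto
    qed
    define H where "H n = phi -` g n \<inter> topspace cX" for n
    show "\<exists>H :: nat \<Rightarrow> 'b set. (\<forall>n. fsigma_in cX (H n)) \<and>
       (\<forall>F \<in> nonsingleton_fibres cX dX phi.
          \<exists>n. ec ` topspace X \<subseteq> H n \<and> H n \<subseteq> topspace cX - F)"
    proof (intro exI[of _ H] conjI allI ballI)
      show "fsigma_in cX (H n)" for n unfolding H_def using fsigma_preimage[OF phi gf] .
      fix F assume "F \<in> nonsingleton_fibres cX dX phi"
      then obtain x where x: "F = phi -` {x} \<inter> topspace cX" "x \<in> topspace dX"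
        "\<not> (\<exists>y. phi -` {x} \<inter> topspace cX = {y})"
        unfolding nonsingleton_fibres_def by blast
      have "x \<notin> ed ` topspace X"
      proof
        assume "x \<in> ed ` topspace X"
        then obtain z where z: "z \<in> topspace X" "x = ed z" by blast
        have "phi -` {x} \<inter> topspace cX = {ec z}"
        proof (intro equalityI subsetI)
          fix y assume "y \<in> phi -` {x} \<inter> topspace cX"
          then show "y \<in> {ec z}" using key[OF z(1)] z(2) by simp
        next
          fix y assume "y \<in> {ec z}"
          then show "y \<in> phi -` {x} \<inter> topspace cX" using z e[OF z(1)] ecsub by auto
        qed
        then have "\<exists>y. phi -` {x} \<inter> topspace cX = {y}" by (rule exI)
        with x(3) show False by simp
      qed
      then have "x \<notin> topspace dX \<inter> \<Inter>U" unfolding U(3) .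
      then obtain u where u: "u \<in> U" "x \<notin> u" using x(2) by blast
      have "u \<in> range g" using u(1) unfolding rg U'_def by simp
      then obtain n where n: "g n = u" by blast
      show "\<exists>n. ec ` topspace X \<subseteq> H n \<and> H n \<subseteq> topspace cX - F"
      proof (intro exI conjI)
        show "ec ` topspace X \<subseteq> H n"
        proof
          fix y assume "y \<in> ec ` topspace X"
          then obtain z where z: "z \<in> topspace X" "y = ec z" by blast
          have "phi y = ed z" using z e[OF z(1)] by simp
          then have "phi y \<in> ed ` topspace X" using z(1) by simp
          then have "phi y \<in> topspace dX \<inter> \<Inter>U" unfolding U(3) .
          then have "phi y \<in> u" using u(1) by blast
          then show "y \<in> H n" unfolding H_def n using z ecsub by blast
        qed
        show "H n \<subseteq> topspace cX - F"
          unfolding H_def n x(1) using u(2) by auto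
      qed
    qed
  next
    assume "\<exists>H :: nat \<Rightarrow> 'b set. (\<forall>n. fsigma_in cX (H n)) \<and>
       (\<forall>F \<in> nonsingleton_fibres cX dX phi.
          \<exists>n. ec ` topspace X \<subseteq> H n \<and> H n \<subseteq> topspace cX - F)"
    then obtain H :: "nat \<Rightarrow> 'b set" where H: "\<And>n. fsigma_in cX (H n)"
      "\<And>F. F \<in> nonsingleton_fibres cX dX phi \<Longrightarrow>
          \<exists>n. ec ` topspace X \<subseteq> H n \<and> H n \<subseteq> topspace cX - F" by blast
    have cpt: "compact_space cX" and hd: "Hausdorff_space dX"
      using cc cd unfolding compactification_def by auto
    define U where "U = insert (phi ` topspace cX)
       ((\<lambda>n. phi ` H n) ` {n. ec ` topspace X \<subseteq> H n} \<union> (\<lambda>u. phi ` u) ` V)"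
    have "countable U" unfolding U_def using V(1) by auto
    moreover have "\<forall>u\<in>U. fsigma_in dX u"
    proof
      fix u assume "u \<in> U"
      then consider "u = phi ` topspace cX" | n where "u = phi ` H n" | v where "v \<in> V" "u = phi ` v"
        unfolding U_def by blast
      then show "fsigma_in dX u"
        by cases (use fsigma_image[OF phi _ cpt hd] H(1) V(2) in auto)
    qed
    moreover have "topspace dX \<inter> \<Inter>U = ed ` topspace X"
    proof
      show "ed ` topspace X \<subseteq> topspace dX \<inter> \<Inter>U"
      proof
        fix d assume "d \<in> ed ` topspace X"
        then obtain z where z: "z \<in> topspace X" "d = ed z" by blast
        have d: "d = phi (ec z)" using z e by simp
        have "ec z \<in> topspace cX \<inter> \<Inter>V" unfolding V(3) using z(1) by blast
        then have "ec z \<in> u" if "u \<in> V" for u using that by blast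
        then have "\<forall>u\<in>U. d \<in> u"
          unfolding U_def using d z ecsub by auto
        then show "d \<in> topspace dX \<inter> \<Inter>U"
          using z edsub by blast
      qed
      show "topspace dX \<inter> \<Inter>U \<subseteq> ed ` topspace X"
      proof
        fix d assume dU: "d \<in> topspace dX \<inter> \<Inter>U"
        have "phi ` topspace cX \<in> U" unfolding U_def by blast
        then obtain y where y: "y \<in> topspace cX" "d = phi y" using dU by blast
        show "d \<in> ed ` topspace X"
        proof (rule ccontr)
          assume dn: "d \<notin> ed ` topspace X"
          show False
          proof (cases "\<exists>y'. phi -` {d} \<inter> topspace cX = {y'}")
            case True
            then obtain y' where y': "phi -` {d} \<inter> topspace cX = {y'}" by blast
            have "y \<in> phi -` {d} \<inter> topspace cX" using y by simp
            then have yy: "y' = y" unfolding y' by simp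
            have "y \<notin> ec ` topspace X" using dn y e by auto
            then have "y \<notin> topspace cX \<inter> \<Inter>V" unfolding V(3) .
            then obtain u where u: "u \<in> V" "y \<notin> u" using y(1) by blast
            have "phi ` u \<in> U" unfolding U_def using u(1) by blast
            then have "d \<in> phi ` u" using dU by blast
            then obtain y'' where "y'' \<in> u" "d = phi y''" by blast
            moreover have "y'' \<in> topspace cX" using fsigma_in_subset[OF V(2)[OF u(1)]] calculation by blast
            ultimately have "y'' \<in> phi -` {d} \<inter> topspace cX" by simp
            then have "y'' = y" unfolding y' yy by simp
            then show False using u(2) \<open>y'' \<in> u\<close> by blast
          next
            case False
            then have "phi -` {d} \<inter> topspace cX \<in> nonsingleton_fibres cX dX phi"
              unfolding nonsingleton_fibres_def mem_Collect_eq
              by (intro exI[of _ d] conjI refl) (use dU False in auto)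
            then obtain n where n: "ec ` topspace X \<subseteq> H n"
              "H n \<subseteq> topspace cX - (phi -` {d} \<inter> topspace cX)" using H(2) by blast
            have "phi ` H n \<in> U" unfolding U_def using n(1) by blast
            then have "d \<in> phi ` H n" using dU by blast
            then obtain y'' where y'': "y'' \<in> H n" "d = phi y''" by blast
            then have "y'' \<in> topspace cX" using n(2) by blast
            then have "y'' \<in> phi -` {d} \<inter> topspace cX" using y''(2) by simp
            then show False using n(2) y''(1) by blast
          qed
        qed
      qed
    qed
    ultimately show "fsigmadelta_in dX (ed ` topspace X)"
      unfolding fsigmadelta_iff by (intro exI[of _ U] conjI)
  qed
qed

end
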